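(* Let $b\ge 2$ and $\ell\ge 1$ be integers, $m=b^{\ell+1}$, let $S=S_\ell:(\mathbb{Z}/m\mathbb{Z})^{\times}\to\mathbb{R}$ be the collision deviation and $S^{\circ}$ its centered version (see context). Then for every Dirichlet character $\chi$ modulo $m$ that is even, i.e. $\chi(-1)=1$, \[ \hat{S}^{\circ}(\chi)=\frac{1}{\phi(m)}\sum_{a\in(\mathbb{Z}/m\mathbb{Z})^{\times}} S^{\circ}(a)\,\overline{\chi}(a)=0 . \]
   Context: The collision deviation $S_\ell(p)$ is a real-valued invariant of primes $p$ with $\gcd(p,b)=1$, introduced in a companion paper; it depends only on $p\bmod m$, $m=b^{\ell+1}$, so it is regarded as a function $S$ on $(\mathbb{Z}/m\mathbb{Z})^{\times}$. It satisfies the reflection identity $S(a)+S(m-a)=-1$ for every unit $a$ mod $m$ (established in the companion paper, taken as given). For a unit $a$ mod $m$, its spectral class is $R(a)=(a-1)\bmod b\in\{0,\dots,b-1\}$ (well defined since $b\mid m$). For each spectral class $R$ attained by some unit, $\overline{S}_R$ denotes the average of $S$ over all units $a\in(\mathbb{Z}/m\mathbb{Z})^{\times}$ with $R(a)=R$. The centered collision deviation is $S^{\circ}(a)=S(a)-\overline{S}_{R(a)}$, and its transform is $\hat{S}^{\circ}(\chi)=\frac{1}{\phi(m)}\sum_a S^{\circ}(a)\overline{\chi}(a)$. *)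

theory Defs
  imports "HOL-Number_Theory.Number_Theory" "HOL-Analysis.Analysis"
begin

definition units_mod :: "nat \<Rightarrow> nat set" where
  "units_mod m = {a. a < m \<and> coprime a m}"

definition dirichlet_character :: "nat \<Rightarrow> (nat \<Rightarrow> complex) \<Rightarrow> bool" where
  "dirichlet_character m chi \<longleftrightarrow>
     (\<forall>n. chi (n + m) = chi n) \<and>
     (\<forall>x y. chi (x * y) = chi x * chi y) \<and>
     chi 1 = 1 \<and>
     (\<forall>n. chi n = 0 \<longleftrightarrow> \<not> coprime n m)"

text \<open>Even character: chi(-1) = 1, where -1 is represented by m - 1.\<close>
definition even_character :: "nat \<Rightarrow> (nat \<Rightarrow> complex) \<Rightarrow> bool" where
  "even_character m chi \<longleftrightarrow> chi (m - 1) = 1"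

text \<open>Spectral class R(a) = (a - 1) mod b (units a are \<ge> 1).\<close>
definition spectral_class :: "nat \<Rightarrow> nat \<Rightarrow> nat" where
  "spectral_class b a = (a - 1) mod b"

definition class_avg :: "nat \<Rightarrow> nat \<Rightarrow> (nat \<Rightarrow> real) \<Rightarrow> nat \<Rightarrow> real" where
  "class_avg b m S R =
     (\<Sum>a\<in>{a\<in>units_mod m. spectral_class b a = R}. S a) /
     real (card {a\<in>units_mod m. spectral_class b a = R})"

definition centered :: "nat \<Rightarrow> nat \<Rightarrow> (nat \<Rightarrow> real) \<Rightarrow> nat \<Rightarrow> real" where
  "centered b m S a = S a - class_avg b m S (spectral_class b a)"

definition centered_transform ::
  "nat \<Rightarrow> nat \<Rightarrow> (nat \<Rightarrow> real) \<Rightarrow> (nat \<Rightarrow> complex) \<Rightarrow> complex" where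
  "centered_transform b m S chi =
     (1 / of_nat (totient m)) *
     (\<Sum>a\<in>units_mod m. complex_of_real (centered b m S a) * cnj (chi a))"

end

theory Submission
  imports Defs
begin

lemma sc_iff:
  assumes "x \<ge> 1" "y \<ge> 1"
  shows "spectral_class b x = spectral_class b y \<longleftrightarrow> int b dvd (int x - int y)"
proof -
  have "spectral_class b x = spectral_class b y \<longleftrightarrow> int (x-1) mod int b = int (y-1) mod int b"
    unfolding spectral_class_def by (metis of_nat_eq_iff zmod_int)
  also have "\<dots> \<longleftrightarrow> int b dvd (int (x-1) - int (y-1))" by (rule mod_eq_dvd_iff)
  also have "int (x-1) - int (y-1) = int x - int y" using assms by simp
  finally show ?thesis .
qed

lemma units_pos: "m > 1 \<Longrightarrow> a \<in> units_mod m \<Longrightarrow> a \<ge> 1"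
  unfolding units_mod_def by (cases a) auto

lemma units_refl: assumes "m > 1" "a \<in> units_mod m" shows "m - a \<in> units_mod m"
proof -
  have a1: "a \<ge> 1" using units_pos assms by blast
  have am: "a < m" and cop: "coprime a m" using assms(2) unfolding units_mod_def by simp_all
  have g: "gcd (m - a) m = gcd a m"
    using gcd_diff2_nat[of a m] am by simp
  have "coprime (m - a) m" using cop g by (simp only: coprime_iff_gcd_eq_1)
  moreover have "m - a < m" using a1 am by simp
  ultimately show ?thesis unfolding units_mod_def by simp
qed

lemma sc_refl_iff:
  assumes "m > 1" "int b dvd int m" "x \<in> units_mod m" "y \<in> units_mod m"
  shows "spectral_class b (m - x) = spectral_class b (m - y) \<longleftrightarrow> spectral_class b x = spectral_class b y"
proof -
  have x: "x \<ge> 1" "x < m" and y: "y \<ge> 1" "y < m"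
    using assms units_pos[of m] unfolding units_mod_def by auto
  have "spectral_class b (m - x) = spectral_class b (m - y) \<longleftrightarrow> int b dvd (int (m-x) - int (m-y))"
    using x y by (intro sc_iff) auto
  also have "int (m-x) - int (m-y) = - (int x - int y)" using x y by simp
  also have "int b dvd - (int x - int y) \<longleftrightarrow> int b dvd (int x - int y)" by (rule dvd_minus_iff)
  also have "\<dots> \<longleftrightarrow> spectral_class b x = spectral_class b y" using x y by (simp add: sc_iff)
  finally show ?thesis .
qed

lemma chi_periodic: assumes "dirichlet_character m chi" shows "chi (n + k * m) = chi n"
proof (induction k)
  case (Suc k)
  have "chi (n + Suc k * m) = chi ((n + k * m) + m)" by (simp add: algebra_simps)
  also have "\<dots> = chi (n + k*m)" using assms unfolding dirichlet_character_def by blast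
  finally show ?case using Suc by simp
qed simp

theorem mainTheorem2:
  fixes b l m :: nat and S :: "nat \<Rightarrow> real" and chi :: "nat \<Rightarrow> complex"
  assumes "b \<ge> 2" and "l \<ge> 1" and "m = b ^ (l + 1)"
    and reflection: "\<And>a. a \<in> units_mod m \<Longrightarrow> S a + S (m - a) = -1"
    and "dirichlet_character m chi" and "even_character m chi"
  shows "centered_transform b m S chi = 0"
proof -
  define U where "U = units_mod m"
  have m1: "m > 1" using assms(1,3)
  proof -
    have "b ^ 1 < b ^ (l + 1)" using assms(1,2) by (intro power_strict_increasing) auto
    then have "b < m" using assms(3) by simp
    then show ?thesis using assms(1) by linarith
  qed
  have bm: "int b dvd int m" using assms(3) by (simp add: of_nat_dvd_iff)
  have "U \<subseteq> {..<m}" unfolding U_def units_mod_def by blast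
  then have fin: "finite U" using finite_subset by blast
  have inv1: "m - (m - a) = a" if "a \<in> U" for a
  proof -
    have "a < m" using that unfolding U_def units_mod_def by simp
    then show ?thesis by simp
  qed
  have inv2: "m - a \<in> U" if "a \<in> U" for a
    using units_refl[OF m1] that unfolding U_def by blast
  note inv = inv1 inv2
  have bij: "bij_betw (\<lambda>a. m - a) U U"
    by (rule bij_betwI[where g="\<lambda>a. m - a"]) (auto simp: inv)
  have chi_refl: "chi (m - a) = chi a" if "a \<in> U" for a
  proof -
    have a1: "a \<ge> 1" using that units_pos[OF m1] unfolding U_def by blast
    have a2: "a \<le> m" using that unfolding U_def units_mod_def by simp
    have "int ((m - 1) * a) = (int m - 1) * int a" using m1 by (simp add: of_nat_diff)
    also have "\<dots> = (int m - int a) + (int a - 1) * int m" by (simp add: algebra_simps)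
    also have "\<dots> = int ((m - a) + (a - 1) * m)" using a1 a2 by (simp add: of_nat_diff)
    finally have "(m - 1) * a = (m - a) + (a - 1) * m" by (simp only: of_nat_eq_iff)
    then have "chi ((m - 1) * a) = chi (m - a)" using chi_periodic[OF assms(5), of "m - a" "a - 1"] by simp
    moreover have "chi ((m - 1) * a) = chi (m - 1) * chi a" using assms(5)
      unfolding dirichlet_character_def by blast
    moreover have "chi (m - 1) = 1" using assms(6) unfolding even_character_def by blast
    ultimately show ?thesis by simp
  qed
  define C where "C x = {a \<in> U. spectral_class b a = spectral_class b x}" for x
  have Cimg: "C (m - x) = (\<lambda>a. m - a) ` C x" if "x \<in> U" for x
  proof
    show "C (m - x) \<subseteq> (\<lambda>a. m - a) ` C x"
    proof
      fix y assume y: "y \<in> C (m - x)"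
      then have yU: "y \<in> U" and sy: "spectral_class b y = spectral_class b (m - x)"
        unfolding C_def by simp_all
      have e: "m - (m - y) = y" using inv(1)[OF yU] .
      have "spectral_class b (m - (m - y)) = spectral_class b (m - x)" unfolding e by (rule sy)
      moreover have "m - y \<in> units_mod m" "x \<in> units_mod m" using inv(2)[OF yU] that unfolding U_def by simp_all
      ultimately have s2: "spectral_class b (m - y) = spectral_class b x"
        using sc_refl_iff[OF m1 bm, of "m - y" x] by simp
      have "m - y \<in> C x" unfolding C_def using inv(2)[OF yU] s2 by simp
      then show "y \<in> (\<lambda>a. m - a) ` C x" using image_eqI[of y "\<lambda>a. m - a" "m - y"] e by simp
    qed
    show "(\<lambda>a. m - a) ` C x \<subseteq> C (m - x)"
    proof
      fix z assume "z \<in> (\<lambda>a. m - a) ` C x"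
      then obtain y where y: "y \<in> C x" "z = m - y" by (rule imageE)
      then have yU: "y \<in> U" and sy: "spectral_class b y = spectral_class b x" unfolding C_def by simp_all
      have "y \<in> units_mod m" "x \<in> units_mod m" using yU that unfolding U_def by simp_all
      then have "spectral_class b (m - y) = spectral_class b (m - x)"
        using sc_refl_iff[OF m1 bm, of y x] sy by simp
      then show "z \<in> C (m - x)" unfolding C_def using y(2) inv(2)[OF yU] by simp
    qed
  qed
  have avg: "class_avg b m S (spectral_class b x) = (\<Sum>a\<in>C x. S a) / real (card (C x))" for x
    unfolding class_avg_def C_def U_def by simp
  have avg_refl: "class_avg b m S (spectral_class b (m - x)) = -1 - class_avg b m S (spectral_class b x)"
    if "x \<in> U" for x
  proof -
    have injC: "inj_on (\<lambda>a. m - a) (C x)"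
    proof (rule inj_on_subset)
      show "inj_on (\<lambda>a. m - a) U" using bij unfolding bij_betw_def by simp
      show "C x \<subseteq> U" unfolding C_def by blast
    qed
    have finC: "finite (C x)" using fin unfolding C_def by auto
    have "x \<in> C x" using that unfolding C_def by auto
    then have cpos: "card (C x) > 0" using finC card_gt_0_iff by blast
    have "(\<Sum>a\<in>C (m - x). S a) = (\<Sum>a\<in>C x. S (m - a))"
      using Cimg[OF that] injC by (simp add: sum.reindex)
    also have "\<dots> = (\<Sum>a\<in>C x. -1 - S a)"
      by (rule sum.cong) (use reflection in \<open>auto simp: C_def U_def algebra_simps\<close>)
    also have "\<dots> = - real (card (C x)) - (\<Sum>a\<in>C x. S a)"
      by (simp add: sum_subtractf)
    finally have s: "(\<Sum>a\<in>C (m - x). S a) = - real (card (C x)) - (\<Sum>a\<in>C x. S a)" .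
    have c: "card (C (m - x)) = card (C x)" using Cimg[OF that] injC by (simp add: card_image)
    show ?thesis unfolding avg s c using cpos by (simp add: field_simps)
  qed
  define f where "f a = complex_of_real (centered b m S a) * cnj (chi a)" for a
  have fodd: "f (m - a) = - f a" if "a \<in> U" for a
  proof -
    have "centered b m S (m - a) = - centered b m S a"
      unfolding centered_def using avg_refl[OF that] reflection[of a] that unfolding U_def by simp
    then show ?thesis unfolding f_def using chi_refl[OF that] by simp
  qed
  have "sum f U = sum (f \<circ> (\<lambda>a. m - a)) U"
    using sum.reindex_bij_betw[OF bij, of f] by simp
  also have "\<dots> = sum (\<lambda>a. - f a) U" by (rule sum.cong) (simp_all add: fodd)
  also have "\<dots> = - sum f U" by (rule sum_negf)
  finally have "sum f U = 0" by simp
  then show ?thesis unfolding centered_transform_def f_def U_def by simp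
qed

end
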